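(* Let $t\geq 2$, let $q$ be a prime power and $d\in F_q$. Suppose there is a $2t\times 2t$ matrix $E=(E_1,E_2)$ over $F_q$, with $E_1,E_2$ of size $2t\times t$, such that (1) $E_1$, $E_2$, $E_1+E_2$, $E_1-E_2$ all belong to $M^{(t)}_{2t\times t}(F_q)$, and (2) the $2t\times 2t$ matrices $E$, $(E_1,E_1+dE_2)$, $(E_2,E_1+dE_2)$, $(E_1+E_2,E_1+dE_2)$, $(E_1-E_2,E_1+dE_2)$ are all nonsingular. Then there exists a $q^t$-CMS$(q^t,t)$.
   Context: $M^{(t)}_{k\times s}(F_q)$ denotes the set of $k\times s$ matrices over the finite field $F_q$ in which any $t$ rows are linearly independent. An MS$(n,t)$ is an $n\times n$ matrix with entries $0,\dots,n^2-1$ such that for each $e=1,\dots,t$ the entrywise $e$-th power has all row sums, column sums, main-diagonal sum and back-diagonal sum (entries $(i,n-1-i)$) equal. With $S_e(n)=\frac1n\sum_{k=0}^{n^2-1}k^e$, a family $\{B_0,\dots,B_{m-1}\}$ of MS$(n,t)$s, $B_s=(b^{(s)}_{i,j})$, $i,j\in\{0,\dots,n-1\}$, is an $m$-CMS$(n,t)$ if $\sum_{s}\sum_{j}(b^{(s)}_{i,j})^{t+1}=mS_{t+1}(n)$ for every $i$, $\sum_{s}\sum_{i}(b^{(s)}_{i,j})^{t+1}=mS_{t+1}(n)$ for every $j$, and $\sum_s\sum_i(b^{(s)}_{i,i})^{t+1}=\sum_s\sum_i(b^{(s)}_{i,n-1-i})^{t+1}=mS_{t+1}(n)$. *)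

theory Defs
  imports "Jordan_Normal_Form.Determinant" "HOL.Real"
begin

definition hcat :: "'a mat \<Rightarrow> 'a mat \<Rightarrow> 'a mat" where
  "hcat A B = mat (dim_row A) (dim_col A + dim_col B)
     (\<lambda>(i,j). if j < dim_col A then A $$ (i,j) else B $$ (i, j - dim_col A))"

definition M_t :: "nat \<Rightarrow> nat \<Rightarrow> nat \<Rightarrow> ('a::field) mat set" where
  "M_t t k s = {A. A \<in> carrier_mat k s \<and>
     (\<forall>I. I \<subseteq> {0..<k} \<and> card I = t \<longrightarrow>
        (\<forall>c :: nat \<Rightarrow> 'a. (\<forall>j<s. (\<Sum>i\<in>I. c i * A $$ (i,j)) = 0) \<longrightarrow> (\<forall>i\<in>I. c i = 0)))}"

definition S :: "nat \<Rightarrow> nat \<Rightarrow> real" where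
  "S e n = (\<Sum>k<n^2. real k ^ e) / real n"

definition MS :: "nat \<Rightarrow> nat \<Rightarrow> (nat \<Rightarrow> nat \<Rightarrow> nat) \<Rightarrow> bool" where
  "MS n t B \<longleftrightarrow>
     bij_betw (\<lambda>(i,j). B i j) ({0..<n} \<times> {0..<n}) {0..<n^2} \<and>
     (\<forall>e\<in>{1..t}. \<exists>c::nat.
        (\<forall>i<n. (\<Sum>j<n. B i j ^ e) = c) \<and>
        (\<forall>j<n. (\<Sum>i<n. B i j ^ e) = c) \<and>
        (\<Sum>i<n. B i i ^ e) = c \<and>
        (\<Sum>i<n. B i (n - 1 - i) ^ e) = c)"

definition CMS :: "nat \<Rightarrow> nat \<Rightarrow> nat \<Rightarrow> (nat \<Rightarrow> nat \<Rightarrow> nat \<Rightarrow> nat) \<Rightarrow> bool" where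
  "CMS m n t B \<longleftrightarrow>
     (\<forall>s<m. MS n t (B s)) \<and>
     (\<forall>i<n. (\<Sum>s<m. \<Sum>j<n. real (B s i j) ^ (t+1)) = real m * S (t+1) n) \<and>
     (\<forall>j<n. (\<Sum>s<m. \<Sum>i<n. real (B s i j) ^ (t+1)) = real m * S (t+1) n) \<and>
     (\<Sum>s<m. \<Sum>i<n. real (B s i i) ^ (t+1)) = real m * S (t+1) n \<and>
     (\<Sum>s<m. \<Sum>i<n. real (B s i (n - 1 - i)) ^ (t+1)) = real m * S (t+1) n"

end

theory Submission imports Defs "HOL-Library.FuncSet" begin


lemma vec_restrict_bij:
  "bij_betw (\<lambda>v. restrict (\<lambda>i. v $ i) {0..<n}) (carrier_vec n) (PiE {0..<n} (\<lambda>_. UNIV))"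
proof (rule bij_betw_byWitness[where f' = "\<lambda>z. vec n z"])
  show "\<forall>a\<in>carrier_vec n. vec n (restrict (($) a) {0..<n}) = a" by auto
  show "\<forall>a'\<in>PiE {0..<n} (\<lambda>_. UNIV). restrict (($) (vec n a')) {0..<n} = a'"
    by (auto simp: PiE_def extensional_def fun_eq_iff)
  show "(\<lambda>v. restrict (($) v) {0..<n}) ` carrier_vec n \<subseteq> PiE {0..<n} (\<lambda>_. UNIV)" by auto
  show "(\<lambda>z. vec n z) ` PiE {0..<n} (\<lambda>_. UNIV) \<subseteq> carrier_vec n" by auto
qed

lemma card_carrier_vec_fin: "card (carrier_vec n :: 'a::finite vec set) = card (UNIV::'a set) ^ n"
  using bij_betw_same_card[OF vec_restrict_bij[of n]] by (simp add: card_PiE)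

lemma finite_carrier_vec_fin: "finite (carrier_vec n :: 'a::finite vec set)"
proof -
  have "card (UNIV::'a set) > 0" by (rule finite_UNIV_card_ge_0) simp
  hence "card (carrier_vec n :: 'a vec set) > 0" by (simp add: card_carrier_vec_fin)
  thus ?thesis using card_ge_0_finite by blast
qed

lemma mv_idx: "A \<in> carrier_mat nr nc \<Longrightarrow> v \<in> carrier_vec nc \<Longrightarrow> i < nr \<Longrightarrow>
   (A *\<^sub>v v) $ i = (\<Sum>j<nc. A $$ (i,j) * v $ j)"
  by (auto simp: scalar_prod_def lessThan_atLeast0 intro!: sum.cong)


lemma inv_enum:
  assumes "finite X" "\<forall>x\<in>X. \<sigma> x \<in> X \<and> \<sigma> (\<sigma> x) = x" "card {x\<in>X. \<sigma> x = x} \<le> 1"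
  shows "\<exists>g. bij_betw g {0..<card X} X \<and> (\<forall>k<card X. g (card X - 1 - k) = \<sigma> (g k))"
  using assms
proof (induction "card X" arbitrary: X rule: less_induct)
  case less
  show ?case
  proof (cases "\<exists>x\<in>X. \<sigma> x \<noteq> x")
    case True
    then obtain x where x: "x \<in> X" "\<sigma> x \<noteq> x" by blast
    define X' where "X' = X - {x, \<sigma> x}"
    define N where "N = card X"
    have sx: "\<sigma> x \<in> X" "\<sigma> (\<sigma> x) = x" using less.prems x by auto
    have cX': "card X' = N - 2" using x sx less.prems(1) unfolding X'_def N_def
      by (subst card_Diff_subset) auto
    have N2: "N \<ge> 2"
    proof -
      have "card {x, \<sigma> x} \<le> card X" using x sx less.prems(1) by (intro card_mono) auto
      thus ?thesis using x unfolding N_def by auto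
    qed
    have "\<exists>g. bij_betw g {0..<card X'} X' \<and> (\<forall>k<card X'. g (card X' - 1 - k) = \<sigma> (g k))"
    proof (rule less.hyps)
      show "card X' < card X" using cX' N2 N_def by simp
      show "finite X'" using less.prems(1) X'_def by simp
      show "\<forall>y\<in>X'. \<sigma> y \<in> X' \<and> \<sigma> (\<sigma> y) = y"
      proof
        fix y assume "y \<in> X'"
        hence y': "y \<in> X" "y \<noteq> x" "y \<noteq> \<sigma> x" by (auto simp: X'_def)
        have a: "\<sigma> y \<in> X" "\<sigma> (\<sigma> y) = y" using less.prems(2) y'(1) by auto
        have b: "\<sigma> y \<noteq> x" using a(2) y'(3) by auto
        have c: "\<sigma> y \<noteq> \<sigma> x" using a(2) y'(2) sx(2) by metis
        show "\<sigma> y \<in> X' \<and> \<sigma> (\<sigma> y) = y" using a b c by (auto simp: X'_def)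
      qed
      have "{y \<in> X'. \<sigma> y = y} \<subseteq> {y \<in> X. \<sigma> y = y}" unfolding X'_def by auto
      moreover have "finite {y \<in> X. \<sigma> y = y}" using less.prems(1) by simp
      ultimately have "card {y \<in> X'. \<sigma> y = y} \<le> card {y \<in> X. \<sigma> y = y}" by (rule card_mono[rotated])
      thus "card {y \<in> X'. \<sigma> y = y} \<le> 1" using less.prems(3) by linarith
    qed
    then obtain g' where g': "bij_betw g' {0..<N-2} X'" "\<forall>k<N-2. g' (N - 2 - 1 - k) = \<sigma> (g' k)"
      using cX' by auto
    define g where "g k = (if k = 0 then x else if k = N - 1 then \<sigma> x else g' (k - 1))" for k
    have img: "g ` {0..<N} = X"
    proof
      show "g ` {0..<N} \<subseteq> X"
      proof
        fix y assume "y \<in> g ` {0..<N}"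
        then obtain k where k: "k < N" "y = g k" by auto
        show "y \<in> X"
        proof (cases "k = 0 \<or> k = N - 1")
          case True thus ?thesis using k x sx g_def by auto
        next
          case False
          hence "k - 1 < N - 2" using k by auto
          hence "g' (k-1) \<in> X'" using g'(1) by (auto simp: bij_betw_def)
          thus ?thesis using k False g_def X'_def by auto
        qed
      qed
      show "X \<subseteq> g ` {0..<N}"
      proof
        fix y assume y: "y \<in> X"
        show "y \<in> g ` {0..<N}"
        proof (cases "y = x \<or> y = \<sigma> x")
          case True
          thus ?thesis using N2 x unfolding g_def
            by (auto intro!: image_eqI[where x=0] image_eqI[where x="N-1"])
        next
          case False
          hence "y \<in> X'" using y X'_def by auto
          then obtain k where k: "k < N - 2" "y = g' k" using g'(1)
            by (metis atLeastLessThan_iff bij_betw_iff_bijections)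
          have "g (k+1) = y" using k g_def by auto
          thus ?thesis using k by (intro image_eqI[where x="k+1"]) auto
        qed
      qed
    qed
    have "bij_betw g {0..<N} X"
      unfolding bij_betw_def using img less.prems(1) N_def
      by (simp add: eq_card_imp_inj_on)
    moreover have "\<forall>k<N. g (N - 1 - k) = \<sigma> (g k)"
    proof (intro allI impI)
      fix k assume k: "k < N"
      show "g (N - 1 - k) = \<sigma> (g k)"
      proof (cases "k = 0 \<or> k = N - 1")
        case True thus ?thesis using N2 sx unfolding g_def by auto
      next
        case False
        hence "k - 1 < N - 2" "N - 1 - k - 1 = N - 2 - 1 - (k - 1)" using k by auto
        thus ?thesis using g'(2) False k unfolding g_def by auto
      qed
    qed
    ultimately show ?thesis using N_def by auto
  next
    case False
    hence "{x\<in>X. \<sigma> x = x} = X" by auto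
    hence c1: "card X \<le> 1" using less.prems(3) by simp
    show ?thesis
    proof (cases "card X = 0")
      case True
      hence "X = {}" using less.prems(1) by simp
      thus ?thesis by (auto simp: bij_betw_def)
    next
      case False
      hence "card X = 1" using c1 by simp
      then obtain z where z: "X = {z}" using card_1_singletonE by blast
      hence "\<sigma> z = z" using less.prems(2) by auto
      thus ?thesis using z by (intro exI[where x="\<lambda>_. z"]) (auto simp: bij_betw_def)
    qed
  qed
qed

lemma Mt_restr_bij:
  fixes A :: "'a::{finite,field} mat"
  assumes A: "A \<in> carrier_mat k t" "A \<in> M_t t k t" and b: "b \<in> carrier_vec k"
    and J: "J \<subseteq> {0..<k}" "card J = t"
  shows "bij_betw (\<lambda>y. restrict (\<lambda>i. (A *\<^sub>v y + b) $ i) J) (carrier_vec t) (PiE J (\<lambda>_. UNIV::'a set))"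
proof -
  have fJ: "finite J" using J(1) finite_subset by blast
  have Mt: "\<And>c. (\<forall>j<t. (\<Sum>i\<in>J. c i * A $$ (i,j)) = 0) \<Longrightarrow> (\<forall>i\<in>J. c i = 0)"
    using A(2) J unfolding M_t_def by blast
  define L where "L c = restrict (\<lambda>j. \<Sum>i\<in>J. c i * A $$ (i,j)) {0..<t}" for c :: "nat \<Rightarrow> 'a"
  have Linj: "inj_on L (PiE J (\<lambda>_. UNIV))"
  proof (rule inj_onI)
    fix c c' assume c: "c \<in> PiE J (\<lambda>_. UNIV)" "c' \<in> PiE J (\<lambda>_. UNIV)" and e: "L c = L c'"
    have "\<forall>j<t. (\<Sum>i\<in>J. (c i - c' i) * A $$ (i,j)) = 0"
    proof (intro allI impI)
      fix j assume "j < t"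
      hence "(\<Sum>i\<in>J. c i * A $$ (i,j)) = (\<Sum>i\<in>J. c' i * A $$ (i,j))"
        using fun_cong[OF e, of j] unfolding L_def by auto
      thus "(\<Sum>i\<in>J. (c i - c' i) * A $$ (i,j)) = 0"
        by (simp add: left_diff_distrib sum_subtractf)
    qed
    hence "\<forall>i\<in>J. c i - c' i = 0" using Mt[of "\<lambda>i. c i - c' i"] by blast
    thus "c = c'" using c by (intro PiE_ext[OF c]) auto
  qed
  have LPi: "L ` PiE J (\<lambda>_. UNIV) \<subseteq> PiE {0..<t} (\<lambda>_. UNIV)" unfolding L_def by auto
  have Lsurj: "L ` PiE J (\<lambda>_. UNIV) = PiE {0..<t} (\<lambda>_. UNIV)"
  proof (rule card_subset_eq)
    show "finite (PiE {0..<t} (\<lambda>_. UNIV::'a set))" by (simp add: finite_PiE)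
    show "card (L ` PiE J (\<lambda>_. UNIV)) = card (PiE {0..<t} (\<lambda>_. UNIV::'a set))"
      using card_image[OF Linj] fJ J(2) by (simp add: card_PiE)
  qed (rule LPi)
  have inj: "inj_on (\<lambda>y. restrict (\<lambda>i. (A *\<^sub>v y + b) $ i) J) (carrier_vec t)"
  proof (rule inj_onI)
    fix y y' assume y: "y \<in> carrier_vec t" "y' \<in> carrier_vec t"
      and e: "restrict (\<lambda>i. (A *\<^sub>v y + b) $ i) J = restrict (\<lambda>i. (A *\<^sub>v y' + b) $ i) J"
    define u where "u = y - y'"
    have u: "u \<in> carrier_vec t" using y u_def by simp
    have uJ: "(\<Sum>j<t. A $$ (i,j) * u $ j) = 0" if i: "i \<in> J" for i
    proof -
      have ik: "i < k" using i J(1) by auto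
      have "(A *\<^sub>v y + b) $ i = (A *\<^sub>v y' + b) $ i" using fun_cong[OF e, of i] i by simp
      hence "(A *\<^sub>v y) $ i = (A *\<^sub>v y') $ i" using ik A(1) b by simp
      hence "(\<Sum>j<t. A $$ (i,j) * y $ j) = (\<Sum>j<t. A $$ (i,j) * y' $ j)"
        using mv_idx[OF A(1) y(1) ik] mv_idx[OF A(1) y(2) ik] by simp
      thus ?thesis unfolding u_def using y
        by (simp add: right_diff_distrib sum_subtractf)
    qed
    have "u = 0\<^sub>v t"
    proof (rule ccontr)
      assume "u \<noteq> 0\<^sub>v t"
      then obtain j0 where j0: "j0 < t" "u $ j0 \<noteq> 0" using u by (metis eq_vecI carrier_vecD index_zero_vec(1,2))
      define r where "r = restrict (\<lambda>j. if j = j0 then (1::'a) else 0) {0..<t}"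
      have "r \<in> PiE {0..<t} (\<lambda>_. UNIV)" unfolding r_def by auto
      then obtain c where c: "c \<in> PiE J (\<lambda>_. UNIV)" "L c = r" using Lsurj by (metis imageE)
      have "(\<Sum>j<t. r j * u $ j) = (\<Sum>j<t. if j = j0 then u $ j0 else 0)"
        by (intro sum.cong) (auto simp: r_def)
      also have "\<dots> = u $ j0" using j0(1) by simp
      finally have "(\<Sum>j<t. r j * u $ j) = u $ j0" .
      also have "(\<Sum>j<t. r j * u $ j) = (\<Sum>j<t. (\<Sum>i\<in>J. c i * A $$ (i,j)) * u $ j)"
        using c(2) unfolding L_def[symmetric] by (intro sum.cong) (auto simp: L_def[of c] dest: fun_cong)
      also have "\<dots> = (\<Sum>i\<in>J. c i * (\<Sum>j<t. A $$ (i,j) * u $ j))"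
        by (simp add: sum_distrib_left sum_distrib_right mult.assoc sum.swap[of _ "{..<t}"])
      also have "\<dots> = 0" using uJ by simp
      finally show False using j0 by simp
    qed
    show "y = y'"
    proof (rule eq_vecI)
      show "dim_vec y = dim_vec y'" using y by simp
      fix j assume "j < dim_vec y'"
      hence j: "j < t" using y by simp
      have "u $ j = 0" using \<open>u = 0\<^sub>v t\<close> j by simp
      thus "y $ j = y' $ j" using j y unfolding u_def by simp
    qed
  qed
  have img: "(\<lambda>y. restrict (\<lambda>i. (A *\<^sub>v y + b) $ i) J) ` carrier_vec t \<subseteq> PiE J (\<lambda>_. UNIV)" by auto
  have "(\<lambda>y. restrict (\<lambda>i. (A *\<^sub>v y + b) $ i) J) ` carrier_vec t = PiE J (\<lambda>_. UNIV)"
  proof (rule card_subset_eq)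
    show "finite (PiE J (\<lambda>_. UNIV::'a set))" using fJ by (simp add: finite_PiE)
    show "card ((\<lambda>y. restrict (\<lambda>i. (A *\<^sub>v y + b) $ i) J) ` carrier_vec t) = card (PiE J (\<lambda>_. UNIV::'a set))"
      using card_image[OF inj] fJ J(2) by (simp add: card_PiE card_carrier_vec_fin)
  qed (rule img)
  thus ?thesis using inj by (simp add: bij_betw_def)
qed

definition dep :: "nat set \<Rightarrow> ('a vec \<Rightarrow> 'b) \<Rightarrow> bool" where
  "dep J h \<longleftrightarrow> (\<forall>w w'. (\<forall>i\<in>J. w $ i = w' $ i) \<longrightarrow> h w = h w')"

definition extv :: "nat \<Rightarrow> nat set \<Rightarrow> (nat \<Rightarrow> 'a) \<Rightarrow> 'a::zero vec" where
  "extv k J z = vec k (\<lambda>i. if i \<in> J then z i else 0)"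

lemma sum_dep:
  fixes A :: "'a::{finite,field} mat" and h :: "'a vec \<Rightarrow> 'b::comm_monoid_add"
  assumes A: "A \<in> carrier_mat k t" "A \<in> M_t t k t" and b: "b \<in> carrier_vec k"
    and J: "J \<subseteq> {0..<k}" "card J = t" and h: "dep J h"
  shows "(\<Sum>y\<in>carrier_vec t. h (A *\<^sub>v y + b)) = (\<Sum>z\<in>PiE J (\<lambda>_. UNIV). h (extv k J z))"
proof -
  have "(\<Sum>y\<in>carrier_vec t. h (A *\<^sub>v y + b)) =
        (\<Sum>y\<in>carrier_vec t. h (extv k J (restrict (\<lambda>i. (A *\<^sub>v y + b) $ i) J)))"
  proof (intro sum.cong refl)
    fix y :: "'a vec" assume "y \<in> carrier_vec t"
    show "h (A *\<^sub>v y + b) = h (extv k J (restrict (\<lambda>i. (A *\<^sub>v y + b) $ i) J))"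
      using h J(1) unfolding dep_def extv_def by (intro h[unfolded dep_def, rule_format]) auto
  qed
  also have "\<dots> = (\<Sum>z\<in>PiE J (\<lambda>_. UNIV). h (extv k J z))"
    by (rule sum.reindex_bij_betw[OF Mt_restr_bij[OF A b J]])
  finally show ?thesis .
qed

lemma sum_cmp:
  fixes A A' :: "'a::{finite,field} mat" and h :: "'a vec \<Rightarrow> 'b::comm_monoid_add"
  assumes A: "A \<in> carrier_mat k t" "A \<in> M_t t k t" and b: "b \<in> carrier_vec k"
    and A': "A' \<in> carrier_mat k t" "A' \<in> M_t t k t" and b': "b' \<in> carrier_vec k"
    and K: "K \<subseteq> {0..<k}" "card K \<le> t" "t \<le> k" and h: "dep K h"
  shows "(\<Sum>y\<in>carrier_vec t. h (A *\<^sub>v y + b)) = (\<Sum>y\<in>carrier_vec t. h (A' *\<^sub>v y + b'))"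
proof -
  have fK: "finite K" using K(1) finite_subset by blast
  have "t - card K \<le> card ({0..<k} - K)" using K fK by (simp add: card_Diff_subset)
  then obtain T where T: "T \<subseteq> {0..<k} - K" "card T = t - card K" "finite T"
    by (rule obtain_subset_with_card_n)
  define J where "J = K \<union> T"
  have dis: "K \<inter> T = {}" using T by auto
  have J: "J \<subseteq> {0..<k}" "card J = t" using T K fK card_Un_disjoint[OF fK T(3) dis] unfolding J_def
    by auto
  have hJ: "dep J h" using h unfolding dep_def J_def by auto
  show ?thesis using sum_dep[OF A b J hJ] sum_dep[OF A' b' J hJ] by simp
qed

definition valv :: "(('a::zero) \<Rightarrow> nat) \<Rightarrow> nat \<Rightarrow> nat \<Rightarrow> 'a vec \<Rightarrow> nat" where
  "valv \<delta> q N w = (\<Sum>i<N. q ^ i * \<delta> (w $ i))"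

lemma valv_pow:
  "valv \<delta> q N w ^ e = (\<Sum>p\<in>PiE {0..<e} (\<lambda>_. {..<N}). \<Prod>l\<in>{0..<e}. q ^ p l * \<delta> (w $ p l))"
proof -
  have "valv \<delta> q N w ^ e = (\<Prod>l\<in>{0..<e}. \<Sum>i\<in>{..<N}. q ^ i * \<delta> (w $ i))"
    by (simp add: valv_def)
  also have "\<dots> = (\<Sum>p\<in>PiE {0..<e} (\<lambda>_. {..<N}). \<Prod>l\<in>{0..<e}. q ^ p l * \<delta> (w $ p l))"
    by (rule prod_sum_PiE) auto
  finally show ?thesis .
qed

lemma pow_cmp:
  fixes A A' :: "'a::{finite,field} mat"
  assumes A: "A \<in> carrier_mat k t" "A \<in> M_t t k t" and b: "b \<in> carrier_vec k"
    and A': "A' \<in> carrier_mat k t" "A' \<in> M_t t k t" and b': "b' \<in> carrier_vec k"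
    and e: "e \<le> t" "t \<le> k"
  shows "(\<Sum>y\<in>carrier_vec t. valv \<delta> q k (A *\<^sub>v y + b) ^ e) = (\<Sum>y\<in>carrier_vec t. valv \<delta> q k (A' *\<^sub>v y + b') ^ e)"
proof -
  define T where "T p w = (\<Prod>l\<in>{0..<e}. q ^ p l * \<delta> (w $ p l))" for p and w :: "'a vec"
  have eq: "(\<Sum>y\<in>carrier_vec t. T p (A *\<^sub>v y + b)) = (\<Sum>y\<in>carrier_vec t. T p (A' *\<^sub>v y + b'))"
    if p: "p \<in> PiE {0..<e} (\<lambda>_. {..<k})" for p
  proof (rule sum_cmp[OF A b A' b'])
    show "p ` {0..<e} \<subseteq> {0..<k}" using p by auto
    show "card (p ` {0..<e}) \<le> t" using card_image_le[of "{0..<e}" p] e by simp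
    show "t \<le> k" by (rule e(2))
    show "dep (p ` {0..<e}) (T p)" unfolding dep_def T_def by auto
  qed
  have "(\<Sum>y\<in>carrier_vec t. valv \<delta> q k (A *\<^sub>v y + b) ^ e) =
        (\<Sum>p\<in>PiE {0..<e} (\<lambda>_. {..<k}). \<Sum>y\<in>carrier_vec t. T p (A *\<^sub>v y + b))"
    unfolding valv_pow T_def by (rule sum.swap)
  also have "\<dots> = (\<Sum>p\<in>PiE {0..<e} (\<lambda>_. {..<k}). \<Sum>y\<in>carrier_vec t. T p (A' *\<^sub>v y + b'))"
    using eq by (rule sum.cong[OF refl])
  also have "\<dots> = (\<Sum>y\<in>carrier_vec t. valv \<delta> q k (A' *\<^sub>v y + b') ^ e)"
    unfolding valv_pow T_def by (rule sum.swap[symmetric])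
  finally show ?thesis .
qed




lemma digits_lt:
  fixes q :: nat and a :: "nat \<Rightarrow> nat"
  assumes "q > 0" "\<forall>i<N. a i < q"
  shows "(\<Sum>i<N. q ^ i * a i) < q ^ N"
  using assms(2)
proof (induction N)
  case 0 thus ?case by simp
next
  case (Suc N)
  have "(\<Sum>i<N. q ^ i * a i) + 1 \<le> q ^ N" using Suc by fastforce
  moreover have "a N + 1 \<le> q" using Suc.prems by auto
  hence "q ^ N * (a N + 1) \<le> q ^ N * q" by (rule mult_le_mono2)
  ultimately have "(\<Sum>i<N. q ^ i * a i) + q ^ N * a N + 1 \<le> q ^ N * q"
    by (simp add: algebra_simps)
  thus ?case by (simp add: mult.commute)
qed

lemma digits_inj:
  fixes q :: nat and a b :: "nat \<Rightarrow> nat"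
  assumes "q > 0" "\<forall>i<N. a i < q" "\<forall>i<N. b i < q"
    and "(\<Sum>i<N. q ^ i * a i) = (\<Sum>i<N. q ^ i * b i)"
  shows "\<forall>i<N. a i = b i"
  using assms(2-)
proof (induction N)
  case 0 thus ?case by simp
next
  case (Suc N)
  define S where "S = (\<Sum>i<N. q ^ i * a i)"
  define T where "T = (\<Sum>i<N. q ^ i * b i)"
  have S: "S < q ^ N" unfolding S_def using digits_lt[OF assms(1)] Suc.prems by simp
  have T: "T < q ^ N" unfolding T_def using digits_lt[OF assms(1)] Suc.prems by simp
  have e: "S + q ^ N * a N = T + q ^ N * b N" using Suc.prems(3) unfolding S_def T_def by simp
  have qN: "q ^ N > 0" using assms(1) by simp
  have "(S + q ^ N * a N) div q ^ N = a N + S div q ^ N"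
    using qN by (intro div_mult_self2) simp
  hence d1: "(S + q ^ N * a N) div q ^ N = a N" using S by simp
  have "(T + q ^ N * b N) div q ^ N = b N + T div q ^ N"
    using qN by (intro div_mult_self2) simp
  hence d2: "(T + q ^ N * b N) div q ^ N = b N" using T by simp
  have ab: "a N = b N" using d1 d2 e by simp
  hence "S = T" using e by simp
  have "\<forall>i<N. a i = b i"
  proof (rule Suc.IH)
    show "\<forall>i<N. a i < q" "\<forall>i<N. b i < q" using Suc.prems(1,2) by auto
    show "(\<Sum>i<N. q ^ i * a i) = (\<Sum>i<N. q ^ i * b i)" using \<open>S = T\<close> unfolding S_def T_def .
  qed
  thus ?case using ab by (auto simp: less_Suc_eq)
qed

lemma valv_bij:
  fixes \<delta> :: "'a::{finite,zero} \<Rightarrow> nat"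
  assumes d: "bij_betw \<delta> UNIV {0..<card (UNIV::'a set)}"
  shows "bij_betw (valv \<delta> (card (UNIV::'a set)) N) (carrier_vec N) {0..<card (UNIV::'a set) ^ N}"
proof -
  let ?q = "card (UNIV::'a set)"
  have q: "?q > 0" by (rule finite_UNIV_card_ge_0) simp
  have dl: "\<delta> x < ?q" for x using d by (auto simp: bij_betw_def)
  have inj: "inj_on (valv \<delta> ?q N) (carrier_vec N)"
  proof (rule inj_onI)
    fix w w' :: "'a vec" assume w: "w \<in> carrier_vec N" "w' \<in> carrier_vec N"
      and e: "valv \<delta> ?q N w = valv \<delta> ?q N w'"
    have "\<forall>i<N. \<delta> (w $ i) = \<delta> (w' $ i)"
      using digits_inj[OF q, of N "\<lambda>i. \<delta> (w $ i)" "\<lambda>i. \<delta> (w' $ i)"] e dl unfolding valv_def by simp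
    hence "\<forall>i<N. w $ i = w' $ i" using d by (auto simp: bij_betw_def inj_on_def)
    thus "w = w'" using w by (intro eq_vecI) auto
  qed
  have sub: "valv \<delta> ?q N ` carrier_vec N \<subseteq> {0..<?q ^ N}"
    using digits_lt[OF q] dl unfolding valv_def by auto
  have "valv \<delta> ?q N ` carrier_vec N = {0..<?q ^ N}"
    by (rule card_subset_eq[OF _ sub]) (simp_all add: card_image[OF inj] card_carrier_vec_fin)
  thus ?thesis using inj by (simp add: bij_betw_def)
qed

lemma hcat_carrier: "P \<in> carrier_mat N t \<Longrightarrow> Q \<in> carrier_mat N t' \<Longrightarrow> hcat P Q \<in> carrier_mat N (t + t')"
  by (simp add: hcat_def)

lemma pair_bij:
  fixes P Q :: "'a::{finite,field} mat"
  assumes P: "P \<in> carrier_mat N t" and Q: "Q \<in> carrier_mat N t" and N: "N = 2*t"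
    and det: "det (hcat P Q) \<noteq> 0" and b: "b \<in> carrier_vec N"
  shows "bij_betw (\<lambda>(x,y). P *\<^sub>v x + Q *\<^sub>v y + b) (carrier_vec t \<times> carrier_vec t) (carrier_vec N)"
proof -
  let ?H = "hcat P Q"
  have tt: "t + t = N" using N by simp
  have H: "?H \<in> carrier_mat N N" using hcat_carrier[OF P Q] unfolding tt .
  have Hidx: "?H $$ (i,j) = (if j < t then P $$ (i,j) else Q $$ (i, j - t))" if "i < N" "j < N" for i j
  proof -
    have "dim_row P = N" "dim_col P = t" "dim_col Q = t" using P Q by auto
    moreover have "j < t + t" using that tt by simp
    ultimately show ?thesis using that(1) unfolding hcat_def by simp
  qed
  have inj: "inj_on (\<lambda>(x,y). P *\<^sub>v x + Q *\<^sub>v y + b) (carrier_vec t \<times> carrier_vec t)"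
  proof (rule inj_onI, clarify)
    fix x y x' y' :: "'a vec"
    assume xy: "x \<in> carrier_vec t" "y \<in> carrier_vec t" "x' \<in> carrier_vec t" "y' \<in> carrier_vec t"
      and e: "P *\<^sub>v x + Q *\<^sub>v y + b = P *\<^sub>v x' + Q *\<^sub>v y' + b"
    define v where "v = vec N (\<lambda>j. if j < t then x $ j - x' $ j else y $ (j - t) - y' $ (j - t))"
    have v: "v \<in> carrier_vec N" unfolding v_def by simp
    have Hv: "?H *\<^sub>v v = 0\<^sub>v N"
    proof (rule eq_vecI)
      show "dim_vec (?H *\<^sub>v v) = dim_vec (0\<^sub>v N :: 'a vec)" using H by simp
      fix i assume "i < dim_vec (0\<^sub>v N :: 'a vec)"
      hence i: "i < N" by simp
      have ei: "(P *\<^sub>v x + Q *\<^sub>v y + b) $ i = (P *\<^sub>v x' + Q *\<^sub>v y' + b) $ i" using e by simp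
      hence "(P *\<^sub>v x) $ i + (Q *\<^sub>v y) $ i = (P *\<^sub>v x') $ i + (Q *\<^sub>v y') $ i"
        using i P Q b by simp
      hence e2: "(\<Sum>j<t. P $$ (i,j) * x $ j) + (\<Sum>j<t. Q $$ (i,j) * y $ j) =
                 (\<Sum>j<t. P $$ (i,j) * x' $ j) + (\<Sum>j<t. Q $$ (i,j) * y' $ j)"
        using mv_idx[OF P _ i] mv_idx[OF Q _ i] xy by simp
      have s1: "(\<Sum>j\<in>{0..<t}. ?H $$ (i,j) * v $ j) = (\<Sum>j<t. P $$ (i,j) * (x $ j - x' $ j))"
        unfolding lessThan_atLeast0
        by (rule sum.cong[OF refl]) (use i N in \<open>simp add: Hidx v_def\<close>)
      have s2: "(\<Sum>j\<in>{0..<t}. ?H $$ (i,j+t) * v $ (j+t)) = (\<Sum>j<t. Q $$ (i,j) * (y $ j - y' $ j))"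
        unfolding lessThan_atLeast0
        by (rule sum.cong[OF refl]) (use i N in \<open>simp add: Hidx v_def\<close>)
      have s3: "(\<Sum>j\<in>{t..<t+t}. ?H $$ (i,j) * v $ j) = (\<Sum>j\<in>{0..<t}. ?H $$ (i,j+t) * v $ (j+t))"
        using sum.shift_bounds_nat_ivl[of "\<lambda>j. ?H $$ (i,j) * v $ j" 0 t t] by simp
      have s4: "(\<Sum>j<N. ?H $$ (i,j) * v $ j) = (\<Sum>j\<in>{0..<t}. ?H $$ (i,j) * v $ j) + (\<Sum>j\<in>{t..<t+t}. ?H $$ (i,j) * v $ j)"
        unfolding lessThan_atLeast0 N mult_2 by (rule sum.atLeastLessThan_concat[symmetric]) auto
      have s5: "(\<Sum>j<t. P $$ (i,j) * (x $ j - x' $ j)) = (\<Sum>j<t. P $$ (i,j) * x $ j) - (\<Sum>j<t. P $$ (i,j) * x' $ j)"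
        by (simp add: right_diff_distrib sum_subtractf)
      have s6: "(\<Sum>j<t. Q $$ (i,j) * (y $ j - y' $ j)) = (\<Sum>j<t. Q $$ (i,j) * y $ j) - (\<Sum>j<t. Q $$ (i,j) * y' $ j)"
        by (simp add: right_diff_distrib sum_subtractf)
      have "(?H *\<^sub>v v) $ i = (\<Sum>j<N. ?H $$ (i,j) * v $ j)" by (rule mv_idx[OF H v i])
      also have "\<dots> = 0" unfolding s4 s3 s1 s2 s5 s6 using e2 by (simp add: field_simps)
      finally show "(?H *\<^sub>v v) $ i = 0\<^sub>v N $ i" using i by simp
    qed
    have "v = 0\<^sub>v N" using det det_0_iff_vec_prod_zero[OF H] v Hv by blast
    hence vj: "v $ j = 0" if "j < N" for j using that by simp
    have "x = x'"
    proof (rule eq_vecI)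
      fix j assume "j < dim_vec x'" hence "j < t" using xy by simp
      thus "x $ j = x' $ j" using vj[of j] N unfolding v_def by simp
    qed (use xy in simp)
    moreover have "y = y'"
    proof (rule eq_vecI)
      fix j assume "j < dim_vec y'" hence "j < t" using xy by simp
      thus "y $ j = y' $ j" using vj[of "j+t"] N unfolding v_def by simp
    qed (use xy in simp)
    ultimately show "x = x' \<and> y = y'" by simp
  qed
  have mem: "P *\<^sub>v x + Q *\<^sub>v y + b \<in> carrier_vec N" if "x \<in> carrier_vec t" "y \<in> carrier_vec t" for x y
    using that P Q b by (intro add_carrier_vec mult_mat_vec_carrier) auto
  have sub: "(\<lambda>(x,y). P *\<^sub>v x + Q *\<^sub>v y + b) ` (carrier_vec t \<times> carrier_vec t) \<subseteq> carrier_vec N"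
    using mem by auto
  have cc: "card (carrier_vec t \<times> carrier_vec t :: ('a vec \<times> 'a vec) set) = card (carrier_vec N :: 'a vec set)"
    unfolding card_cartesian_product card_carrier_vec_fin N mult_2 power_add by simp
  have "(\<lambda>(x,y). P *\<^sub>v x + Q *\<^sub>v y + b) ` (carrier_vec t \<times> carrier_vec t) = carrier_vec N"
    by (rule card_subset_eq[OF finite_carrier_vec_fin sub])
       (simp only: card_image[OF inj] cc)
  thus ?thesis using inj by (simp add: bij_betw_def)
qed




lemma vidA: "a \<in> carrier_vec N \<Longrightarrow> b \<in> carrier_vec N \<Longrightarrow> c \<in> carrier_vec N \<Longrightarrow>
  a + b + c = b + c + (a :: 'a::comm_ring vec)"
  by (intro eq_vecI) (auto simp: algebra_simps)

lemma vidB: "a \<in> carrier_vec N \<Longrightarrow> b \<in> carrier_vec N \<Longrightarrow> c \<in> carrier_vec N \<Longrightarrow>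
  a + b + c = a + c + (b :: 'a::comm_ring vec)"
  by (intro eq_vecI) (auto simp: algebra_simps)

lemma vidC: "a \<in> carrier_vec N \<Longrightarrow> b \<in> carrier_vec N \<Longrightarrow> c \<in> carrier_vec N \<Longrightarrow>
  a + b + c = b + (a + c :: 'a::comm_ring vec)"
  by (intro eq_vecI) (auto simp: algebra_simps)

lemma vidD: "a \<in> carrier_vec N \<Longrightarrow> b \<in> carrier_vec N \<Longrightarrow> c \<in> carrier_vec N \<Longrightarrow>
  a + b + c = a + (b + c :: 'a::comm_ring vec)"
  by (intro eq_vecI) (auto simp: algebra_simps)

lemma vidE: assumes "A \<in> carrier_mat N t" "B \<in> carrier_mat N t" "x \<in> carrier_vec t" "c \<in> carrier_vec N"
  shows "A *\<^sub>v x + B *\<^sub>v x + c = (A + B) *\<^sub>v x + c + 0\<^sub>v N" (is "?l = ?r")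
proof -
  have "(A + B) *\<^sub>v x = A *\<^sub>v x + B *\<^sub>v x" using assms by (intro add_mult_distrib_mat_vec)
  thus ?thesis using assms by (intro eq_vecI) auto
qed

lemma vidF: assumes "A \<in> carrier_mat N t" "B \<in> carrier_mat N t" "x \<in> carrier_vec t" "c0 \<in> carrier_vec t"
  "c \<in> carrier_vec N"
  shows "A *\<^sub>v x + B *\<^sub>v (c0 - x) + c = (A - B) *\<^sub>v x + c + B *\<^sub>v (c0 :: 'a::comm_ring vec)"
    "A *\<^sub>v x + B *\<^sub>v (c0 - x) + c = (A - B) *\<^sub>v x + (B *\<^sub>v c0 + c)"
proof -
  have 1: "(A - B) *\<^sub>v x = A *\<^sub>v x - B *\<^sub>v x" using assms by (intro minus_mult_distrib_mat_vec)
  have 2: "B *\<^sub>v (c0 - x) = B *\<^sub>v c0 - B *\<^sub>v x" using assms by (intro mult_minus_distrib_mat_vec)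
  show "A *\<^sub>v x + B *\<^sub>v (c0 - x) + c = (A - B) *\<^sub>v x + c + B *\<^sub>v c0"
    unfolding 1 2 using assms by (intro eq_vecI) (auto simp: algebra_simps)
  show "A *\<^sub>v x + B *\<^sub>v (c0 - x) + c = (A - B) *\<^sub>v x + (B *\<^sub>v c0 + c)"
    unfolding 1 2 using assms by (intro eq_vecI) (auto simp: algebra_simps)
qed

lemma line_sum: "bij_betw g {0..<(n::nat)} X \<Longrightarrow> (\<Sum>i<n. f (g i)) = (\<Sum>y\<in>X. f y)"
  using sum.reindex_bij_betw[of g "{0..<n}" X f] by (simp add: atLeast0LessThan)

lemma double_sum:
  fixes P Q :: "'a::{finite,field} mat" and f :: "nat \<Rightarrow> 'b::comm_monoid_add" and n :: nat
  assumes g: "bij_betw g {0..<n} (carrier_vec t)"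
    and P: "P \<in> carrier_mat (2*t) t" and Q: "Q \<in> carrier_mat (2*t) t"
    and det: "det (hcat P Q) \<noteq> 0" and b: "b \<in> carrier_vec (2*t)"
    and V: "bij_betw V (carrier_vec (2*t)) {0..<M}"
  shows "(\<Sum>s<n. \<Sum>i<n. f (V (P *\<^sub>v g i + Q *\<^sub>v g s + b))) = (\<Sum>k<M. f k)"
proof -
  have "(\<Sum>s<n. \<Sum>i<n. f (V (P *\<^sub>v g i + Q *\<^sub>v g s + b))) =
        (\<Sum>s<n. \<Sum>x\<in>carrier_vec t. f (V (P *\<^sub>v x + Q *\<^sub>v g s + b)))"
    by (intro sum.cong refl line_sum[OF g])
  also have "\<dots> = (\<Sum>y\<in>carrier_vec t. \<Sum>x\<in>carrier_vec t. f (V (P *\<^sub>v x + Q *\<^sub>v y + b)))"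
    by (rule line_sum[OF g, where f = "\<lambda>y. \<Sum>x\<in>carrier_vec t. f (V (P *\<^sub>v x + Q *\<^sub>v y + b))"])
  also have "\<dots> = (\<Sum>x\<in>carrier_vec t. \<Sum>y\<in>carrier_vec t. f (V (P *\<^sub>v x + Q *\<^sub>v y + b)))"
    by (rule sum.swap)
  also have "\<dots> = (\<Sum>(x,y)\<in>carrier_vec t \<times> carrier_vec t. f (V (P *\<^sub>v x + Q *\<^sub>v y + b)))"
    by (rule sum.cartesian_product)
  also have "\<dots> = (\<Sum>z\<in>carrier_vec t \<times> carrier_vec t. (f \<circ> V) ((\<lambda>(x,y). P *\<^sub>v x + Q *\<^sub>v y + b) z))"
    by (intro sum.cong refl) auto
  also have "\<dots> = (\<Sum>w\<in>carrier_vec (2*t). (f \<circ> V) w)"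
    by (rule sum.reindex_bij_betw[OF pair_bij[OF P Q refl det b]])
  also have "\<dots> = (\<Sum>k\<in>{0..<M}. f k)"
    unfolding comp_def by (rule sum.reindex_bij_betw[OF V])
  finally show ?thesis by (simp add: lessThan_atLeast0)
qed

lemma line_pow:
  fixes A E :: "'a::{finite,field} mat" and n :: nat
  assumes g: "bij_betw g {0..<n} (carrier_vec t)"
    and A: "A \<in> carrier_mat (2*t) t" "A \<in> M_t t (2*t) t" and b: "b \<in> carrier_vec (2*t)"
    and E: "E \<in> carrier_mat (2*t) t" "E \<in> M_t t (2*t) t" and e: "e \<le> t"
  shows "(\<Sum>i<n. valv \<delta> q (2*t) (A *\<^sub>v g i + b) ^ e) =
         (\<Sum>y\<in>carrier_vec t. valv \<delta> q (2*t) (E *\<^sub>v y + 0\<^sub>v (2*t)) ^ e)"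
proof -
  have "(\<Sum>i<n. valv \<delta> q (2*t) (A *\<^sub>v g i + b) ^ e) = (\<Sum>y\<in>carrier_vec t. valv \<delta> q (2*t) (A *\<^sub>v y + b) ^ e)"
    by (rule line_sum[OF g])
  also have "\<dots> = (\<Sum>y\<in>carrier_vec t. valv \<delta> q (2*t) (E *\<^sub>v y + 0\<^sub>v (2*t)) ^ e)"
    by (rule pow_cmp[OF A b E zero_carrier_vec e]) simp
  finally show ?thesis .
qed




lemma vidE2: assumes "A \<in> carrier_mat N t" "B \<in> carrier_mat N t" "x \<in> carrier_vec t" "c \<in> carrier_vec N"
  shows "A *\<^sub>v x + B *\<^sub>v x + c = (A + B) *\<^sub>v x + (c :: 'a :: comm_ring vec)"
proof -
  have "(A + B) *\<^sub>v x = A *\<^sub>v x + B *\<^sub>v x" using assms by (intro add_mult_distrib_mat_vec)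
  thus ?thesis using assms by (intro eq_vecI) auto
qed

theorem lemma3p3:
  fixes t :: nat and d :: "'a::{finite,field}" and E1 E2 :: "'a mat"
  assumes "t \<ge> 2"
    and "E1 \<in> carrier_mat (2*t) t" and "E2 \<in> carrier_mat (2*t) t"
    and "E1 \<in> M_t t (2*t) t" and "E2 \<in> M_t t (2*t) t"
    and "E1 + E2 \<in> M_t t (2*t) t" and "E1 - E2 \<in> M_t t (2*t) t"
    and "det (hcat E1 E2) \<noteq> 0"
    and "det (hcat E1 (E1 + d \<cdot>\<^sub>m E2)) \<noteq> 0"
    and "det (hcat E2 (E1 + d \<cdot>\<^sub>m E2)) \<noteq> 0"
    and "det (hcat (E1 + E2) (E1 + d \<cdot>\<^sub>m E2)) \<noteq> 0"
    and "det (hcat (E1 - E2) (E1 + d \<cdot>\<^sub>m E2)) \<noteq> 0"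
  shows "\<exists>B. CMS (card (UNIV :: 'a set) ^ t) (card (UNIV :: 'a set) ^ t) t B"
proof -
  note E1 = assms(2) and E2 = assms(3)
  define q where "q = card (UNIV::'a set)"
  define n where "n = q ^ t"
  have q0: "q > 0" unfolding q_def by (rule finite_UNIV_card_ge_0) simp
  have n0: "n > 0" using q0 n_def by simp
  obtain h where h: "bij_betw h {0..<q} (UNIV::'a set)"
    using ex_bij_betw_nat_finite[of "UNIV::'a set"] q_def by auto
  define \<delta> where "\<delta> = inv_into {0..<q} h"
  have \<delta>: "bij_betw \<delta> UNIV {0..<card (UNIV::'a set)}"
    using bij_betw_inv_into[OF h] \<delta>_def q_def by simp
  define V where "V = valv \<delta> q (2*t)"
  have nq: "n ^ 2 = q ^ (2 * t)" unfolding n_def by (simp add: power_mult[symmetric] mult.commute)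
  have V: "bij_betw V (carrier_vec (2*t)) {0..<n^2}"
    using valv_bij[OF \<delta>, of "2*t"] unfolding V_def nq q_def .
  define c0 :: "'a vec" where "c0 = (if (1::'a) + 1 = 0 then vec t (\<lambda>_. 1) else 0\<^sub>v t)"
  have c0: "c0 \<in> carrier_vec t" by (simp add: c0_def)
  have fix0: "v = 0\<^sub>v t" if v: "v \<in> carrier_vec t" "c0 - v = v" for v
  proof (cases "(1::'a) + 1 = 0")
    case True
    have t0: "0 < t" using assms(1) by simp
    have "(c0 - v) $ 0 = v $ 0" using v(2) by simp
    hence "1 - v $ 0 = v $ 0" using True t0 v(1) by (simp add: c0_def)
    hence "1 = (1 + 1) * v $ 0" by (simp add: algebra_simps)
    hence False using True by simp
    thus ?thesis ..
  next
    case False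
    show ?thesis
    proof (rule eq_vecI)
      fix j assume "j < dim_vec (0\<^sub>v t :: 'a vec)" hence j: "j < t" by simp
      have "(c0 - v) $ j = v $ j" using v(2) by simp
      hence "- v $ j = v $ j" using False j v(1) by (simp add: c0_def)
      hence "(1 + 1) * v $ j = 0" by (simp add: algebra_simps)
      thus "v $ j = 0\<^sub>v t $ j" using False j by simp
    qed (use v in simp)
  qed
  have cardX: "card (carrier_vec t :: 'a vec set) = n" by (simp add: card_carrier_vec_fin n_def q_def)
  have cl: "\<forall>x\<in>carrier_vec t. c0 - x \<in> carrier_vec t \<and> c0 - (c0 - x) = x"
    using c0 by (auto intro!: eq_vecI)
  have "{x \<in> carrier_vec t. c0 - x = x} \<subseteq> {0\<^sub>v t}" using fix0 by auto
  hence "card {x \<in> carrier_vec t. c0 - x = x} \<le> card {0\<^sub>v t :: 'a vec}" by (intro card_mono) auto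
  hence cf: "card {x \<in> carrier_vec t. c0 - x = x} \<le> 1" by simp
  obtain g where g: "bij_betw g {0..<n} (carrier_vec t)" and gs: "\<forall>k<n. g (n - 1 - k) = c0 - g k"
    using inv_enum[of "carrier_vec t" "\<lambda>v. c0 - v", OF finite_carrier_vec_fin cl cf] cardX by auto
  have gc: "g i \<in> carrier_vec t" if "i < n" for i using g that by (auto simp: bij_betw_def)
  define F where "F = E1 + d \<cdot>\<^sub>m E2"
  have Fc: "F \<in> carrier_mat (2*t) t" unfolding F_def using E1 E2 by simp
  have E12: "E1 + E2 \<in> carrier_mat (2*t) t" "E1 - E2 \<in> carrier_mat (2*t) t" using E1 E2 by auto
  have Fg: "F *\<^sub>v g s \<in> carrier_vec (2*t)" if "s < n" for s using Fc gc[OF that] by simp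
  have E1g: "E1 *\<^sub>v g s \<in> carrier_vec (2*t)" if "s < n" for s using E1 gc[OF that] by simp
  have E2g: "E2 *\<^sub>v g s \<in> carrier_vec (2*t)" if "s < n" for s using E2 gc[OF that] by simp
  have E2c0: "E2 *\<^sub>v c0 \<in> carrier_vec (2*t)" using E2 c0 by simp
  define B where "B s i j = V (E1 *\<^sub>v g i + E2 *\<^sub>v g j + F *\<^sub>v g s)" for s i j
  define base where "base e = (\<Sum>y\<in>carrier_vec t. valv \<delta> q (2*t) (E1 *\<^sub>v y + 0\<^sub>v (2*t)) ^ e)" for e
  have lp: "(\<Sum>i<n. V (A *\<^sub>v g i + b) ^ e) = base e"
    if "A \<in> carrier_mat (2*t) t" "A \<in> M_t t (2*t) t" "b \<in> carrier_vec (2*t)" "e \<le> t" for A b e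
    unfolding V_def base_def by (rule line_pow[OF g that(1-3) E1 assms(4) that(4)])
  have MS: "MS n t (B s)" if s: "s < n" for s
  proof -
    have b1: "bij_betw (map_prod g g) ({0..<n} \<times> {0..<n}) (carrier_vec t \<times> carrier_vec t)"
      by (rule bij_betw_map_prod[OF g g])
    have b2: "bij_betw (\<lambda>(x,y). E1 *\<^sub>v x + E2 *\<^sub>v y + F *\<^sub>v g s) (carrier_vec t \<times> carrier_vec t) (carrier_vec (2*t))"
      by (rule pair_bij[OF E1 E2 refl assms(8) Fg[OF s]])
    have "bij_betw (V \<circ> (\<lambda>(x,y). E1 *\<^sub>v x + E2 *\<^sub>v y + F *\<^sub>v g s) \<circ> map_prod g g) ({0..<n} \<times> {0..<n}) {0..<n^2}"
      by (rule bij_betw_trans[OF b1 bij_betw_trans[OF b2 V]])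
    moreover have "(V \<circ> (\<lambda>(x,y). E1 *\<^sub>v x + E2 *\<^sub>v y + F *\<^sub>v g s) \<circ> map_prod g g) p = (\<lambda>(i,j). B s i j) p" for p
      by (cases p) (simp add: B_def)
    ultimately have bij: "bij_betw (\<lambda>(i,j). B s i j) ({0..<n} \<times> {0..<n}) {0..<n^2}"
      by (metis (no_types) ext)
    have sums: "\<exists>c. (\<forall>i<n. (\<Sum>j<n. B s i j ^ e) = c) \<and> (\<forall>j<n. (\<Sum>i<n. B s i j ^ e) = c) \<and>
        (\<Sum>i<n. B s i i ^ e) = c \<and> (\<Sum>i<n. B s i (n - 1 - i) ^ e) = c" if e: "e \<le> t" for e
    proof (intro exI conjI allI impI)
      fix i assume i: "i < n"
      have "(\<Sum>j<n. B s i j ^ e) = (\<Sum>j<n. V (E2 *\<^sub>v g j + (E1 *\<^sub>v g i + F *\<^sub>v g s)) ^ e)"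
        unfolding B_def by (intro sum.cong refl) (simp add: vidC[OF E1g[OF i] E2g Fg[OF s]])
      also have "\<dots> = base e" using lp[OF E2 assms(5) _ e] E1g[OF i] Fg[OF s] by simp
      finally show "(\<Sum>j<n. B s i j ^ e) = base e" .
    next
      fix j assume j: "j < n"
      have "(\<Sum>i<n. B s i j ^ e) = (\<Sum>i<n. V (E1 *\<^sub>v g i + (E2 *\<^sub>v g j + F *\<^sub>v g s)) ^ e)"
        unfolding B_def by (intro sum.cong refl) (simp add: vidD[OF E1g E2g[OF j] Fg[OF s]])
      also have "\<dots> = base e" using lp[OF E1 assms(4) _ e] E2g[OF j] Fg[OF s] by simp
      finally show "(\<Sum>i<n. B s i j ^ e) = base e" .
    next
      have "(\<Sum>i<n. B s i i ^ e) = (\<Sum>i<n. V ((E1 + E2) *\<^sub>v g i + F *\<^sub>v g s) ^ e)"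
        unfolding B_def by (intro sum.cong refl) (simp add: vidE2[OF E1 E2 gc Fg[OF s]])
      also have "\<dots> = base e" using lp[OF E12(1) assms(6) Fg[OF s] e] by simp
      finally show "(\<Sum>i<n. B s i i ^ e) = base e" .
    next
      have "(\<Sum>i<n. B s i (n - 1 - i) ^ e) = (\<Sum>i<n. V ((E1 - E2) *\<^sub>v g i + (E2 *\<^sub>v c0 + F *\<^sub>v g s)) ^ e)"
      proof (intro sum.cong refl)
        fix i assume "i \<in> {..<n}" hence i: "i < n" by simp
        have "g (n - 1 - i) = c0 - g i" using gs i by simp
        thus "B s i (n - 1 - i) ^ e = V ((E1 - E2) *\<^sub>v g i + (E2 *\<^sub>v c0 + F *\<^sub>v g s)) ^ e"
          unfolding B_def using vidF(2)[OF E1 E2 gc[OF i] c0 Fg[OF s]] by simp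
      qed
      also have "\<dots> = base e" using lp[OF E12(2) assms(7) _ e] E2c0 Fg[OF s] by simp
      finally show "(\<Sum>i<n. B s i (n - 1 - i) ^ e) = base e" .
    qed
    show ?thesis unfolding MS_def using bij sums by auto
  qed
  define Tot where "Tot = (\<Sum>k<n^2. real k ^ (t+1))"
  have ds: "(\<Sum>s<n. \<Sum>i<n. real (V (P *\<^sub>v g i + Q *\<^sub>v g s + b)) ^ (t+1)) = Tot"
    if "P \<in> carrier_mat (2*t) t" "Q \<in> carrier_mat (2*t) t" "det (hcat P Q) \<noteq> 0" "b \<in> carrier_vec (2*t)" for P Q b
    unfolding Tot_def by (rule double_sum[OF g that V])
  have mS: "real n * S (t+1) n = Tot" unfolding S_def Tot_def using n0 by simp
  have "CMS n n t B"
    unfolding CMS_def mS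
  proof (intro conjI allI impI)
    fix s assume "s < n" thus "MS n t (B s)" by (rule MS)
  next
    fix i assume i: "i < n"
    have "(\<Sum>s<n. \<Sum>j<n. real (B s i j) ^ (t+1)) = (\<Sum>s<n. \<Sum>j<n. real (V (E2 *\<^sub>v g j + F *\<^sub>v g s + E1 *\<^sub>v g i)) ^ (t+1))"
      unfolding B_def by (intro sum.cong refl) (simp add: vidA[OF E1g[OF i] E2g Fg])
    also have "\<dots> = Tot" by (rule ds[OF E2 Fc assms(10)[folded F_def] E1g[OF i]])
    finally show "(\<Sum>s<n. \<Sum>j<n. real (B s i j) ^ (t+1)) = Tot" .
  next
    fix j assume j: "j < n"
    have "(\<Sum>s<n. \<Sum>i<n. real (B s i j) ^ (t+1)) = (\<Sum>s<n. \<Sum>i<n. real (V (E1 *\<^sub>v g i + F *\<^sub>v g s + E2 *\<^sub>v g j)) ^ (t+1))"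
      unfolding B_def by (intro sum.cong refl) (simp add: vidB[OF E1g E2g[OF j] Fg])
    also have "\<dots> = Tot" by (rule ds[OF E1 Fc assms(9)[folded F_def] E2g[OF j]])
    finally show "(\<Sum>s<n. \<Sum>i<n. real (B s i j) ^ (t+1)) = Tot" .
  next
    have "(\<Sum>s<n. \<Sum>i<n. real (B s i i) ^ (t+1)) = (\<Sum>s<n. \<Sum>i<n. real (V ((E1 + E2) *\<^sub>v g i + F *\<^sub>v g s + 0\<^sub>v (2*t))) ^ (t+1))"
      unfolding B_def by (intro sum.cong refl) (simp add: vidE[OF E1 E2 gc Fg])
    also have "\<dots> = Tot" by (rule ds[OF E12(1) Fc assms(11)[folded F_def] zero_carrier_vec])
    finally show "(\<Sum>s<n. \<Sum>i<n. real (B s i i) ^ (t+1)) = Tot" .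
  next
    have "(\<Sum>s<n. \<Sum>i<n. real (B s i (n - 1 - i)) ^ (t+1)) = (\<Sum>s<n. \<Sum>i<n. real (V ((E1 - E2) *\<^sub>v g i + F *\<^sub>v g s + E2 *\<^sub>v c0)) ^ (t+1))"
    proof (intro sum.cong refl)
      fix s i assume "s \<in> {..<n}" "i \<in> {..<n}" hence s: "s < n" and i: "i < n" by auto
      have "g (n - 1 - i) = c0 - g i" using gs i by simp
      thus "real (B s i (n - 1 - i)) ^ (t+1) = real (V ((E1 - E2) *\<^sub>v g i + F *\<^sub>v g s + E2 *\<^sub>v c0)) ^ (t+1)"
        unfolding B_def using vidF(1)[OF E1 E2 gc[OF i] c0 Fg[OF s]] by simp
    qed
    also have "\<dots> = Tot" by (rule ds[OF E12(2) Fc assms(12)[folded F_def] E2c0])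
    finally show "(\<Sum>s<n. \<Sum>i<n. real (B s i (n - 1 - i)) ^ (t+1)) = Tot" .
  qed
  thus ?thesis unfolding n_def q_def by blast
qed


end
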